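(* Let $f:[0,1]^n\to[0,1]$ be continuous and such that $f$ and $1-f$ are polynomially bounded. Then there exists a function $g:[0,1]^n\to[0,1]$ that is implementable by a finite Bernoulli factory such that the function $\tilde f(p)=\frac43\left(f(p)-\frac14 g(p)\right)$ maps $[0,1]^n$ into $[0,1]$, is continuous, and both $\tilde f$ and $1-\tilde f$ are polynomially bounded.
   Context: A (multiparameter) Bernoulli factory with input $(p_1,\dots,p_n)$ is a (possibly infinite) rooted binary tree in which every node has either $2$ children or $0$ children (leaf). Each internal node is labelled either by an index $i\in[n]$ or by a constant $c\in(0,1)$; each leaf is labelled $0$ or $1$. To execute it with coins $p\in[0,1]^n$, start at the root; at a node labelled $i$ draw a fresh independent Bernoulli($p_i$) sample, at a node labelled $c$ a fresh independent Bernoulli($c$) sample; move to the child corresponding to the outcome; upon reaching a leaf output its label. A function $g$ is implementable by a factory if for every $p\in[0,1]^n$ a leaf is reached almost surely and the output is $1$ with probability exactly $g(p)$. The factory is finite if its tree has finitely many nodes. For a partition $[n]=A\sqcup S\sqcup B$, the open face is $F_{A,S,B}=\{p\in[0,1]^n: p_i=0\ (i\in A),\ 0<p_i<1\ (i\in S),\ p_i=1\ (i\in B)\}$. For $T\subseteq[n]$, $p^T=\prod_{i\in T}p_i$, $(1-p)^T=\prod_{i\in T}(1-p_i)$. A function $h:[0,1]^n\to[0,1]$ is polynomially bounded if there exist an integer $m\ge0$ and a real $c>0$ such that for every open face $F_{A,S,B}$ on which $h$ is not identically $0$, $h(p)\ge c\left((1-p)^A p^S(1-p)^S p^B\right)^m$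 for all $p\in[0,1]^n$. *)

theory Defs
  imports "HOL-Analysis.Analysis"
begin

text \<open>Internal nodes are labelled
by a coin index (an element of the finite index type 'i, playing the role of [n]) or by a
constant c; leaves are labelled 0/1 (False/True). Since HOL datatype values are finite,
every value of this type is a finite tree. The first child is taken on outcome 1, the
second on outcome 0.\<close>

datatype 'i factory =
    Leaf bool
  | Coin 'i "'i factory" "'i factory"
  | Const real "'i factory" "'i factory"

fun valid_factory :: "'i factory \<Rightarrow> bool" where
  "valid_factory (Leaf b) = True"
| "valid_factory (Coin i t1 t0) = (valid_factory t1 \<and> valid_factory t0)"
| "valid_factory (Const c t1 t0) = (0 < c \<and> c < 1 \<and> valid_factory t1 \<and> valid_factory t0)"

fun factory_prob :: "'i factory \<Rightarrow> (real ^ 'i) \<Rightarrow> real" where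
  "factory_prob (Leaf b) p = (if b then 1 else 0)"
| "factory_prob (Coin i t1 t0) p = p $ i * factory_prob t1 p + (1 - p $ i) * factory_prob t0 p"
| "factory_prob (Const c t1 t0) p = c * factory_prob t1 p + (1 - c) * factory_prob t0 p"

definition unit_cube :: "(real ^ 'n::finite) set" where
  "unit_cube = {p. \<forall>i. 0 \<le> p $ i \<and> p $ i \<le> 1}"

definition finite_factory_implementable :: "((real ^ 'n::finite) \<Rightarrow> real) \<Rightarrow> bool" where
  "finite_factory_implementable g \<longleftrightarrow>
     (\<exists>t::'n factory. valid_factory t \<and> (\<forall>p\<in>unit_cube. g p = factory_prob t p))"

definition open_face :: "'n set \<Rightarrow> 'n set \<Rightarrow> 'n set \<Rightarrow> (real ^ 'n::finite) set" where
  "open_face A S B = {p. (\<forall>i\<in>A. p $ i = 0) \<and> (\<forall>i\<in>S. 0 < p $ i \<and> p $ i < 1) \<and> (\<forall>i\<in>B. p $ i = 1)}"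

definition is_partition3 :: "'n set \<Rightarrow> 'n set \<Rightarrow> 'n set \<Rightarrow> bool" where
  "is_partition3 A S B \<longleftrightarrow> A \<inter> S = {} \<and> A \<inter> B = {} \<and> S \<inter> B = {} \<and> A \<union> S \<union> B = UNIV"

definition poly_bounded :: "((real ^ 'n::finite) \<Rightarrow> real) \<Rightarrow> bool" where
  "poly_bounded h \<longleftrightarrow>
     (\<exists>(m::nat) (c::real). c > 0 \<and>
        (\<forall>A S B. is_partition3 A S B \<longrightarrow> (\<exists>q\<in>open_face A S B. h q \<noteq> 0) \<longrightarrow>
           (\<forall>p\<in>unit_cube.
              h p \<ge> c * ((\<Prod>i\<in>A. 1 - p $ i) * (\<Prod>i\<in>S. p $ i) * (\<Prod>i\<in>S. 1 - p $ i)
                          * (\<Prod>i\<in>B. p $ i)) ^ m)))"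

end

theory Submission
  imports Defs
begin

definition bern_leaf :: "real \<Rightarrow> 'n factory" where
  "bern_leaf c = (if c \<le> 0 then Leaf False else if 1 \<le> c then Leaf True
                  else Const c (Leaf True) (Leaf False))"

lemma valid_bern_leaf: "valid_factory (bern_leaf c)"
  by (auto simp: bern_leaf_def)

lemma prob_bern_leaf: "0 \<le> c \<Longrightarrow> c \<le> 1 \<Longrightarrow> factory_prob (bern_leaf c) p = c"
  by (auto simp: bern_leaf_def)

lemma prob_range:
  assumes "valid_factory t" "p \<in> unit_cube"
  shows "0 \<le> factory_prob t p \<and> factory_prob t p \<le> 1"
  using assms(1)
proof (induction t)
  case (Leaf b) then show ?case by simp
next
  case (Coin i t1 t0)
  have pi: "0 \<le> p $ i" "p $ i \<le> 1" using assms(2) by (auto simp: unit_cube_def)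
  from Coin have a: "0 \<le> factory_prob t1 p" "factory_prob t1 p \<le> 1"
     "0 \<le> factory_prob t0 p" "factory_prob t0 p \<le> 1" by auto
  have "p $ i * factory_prob t1 p + (1 - p $ i) * factory_prob t0 p \<le> p $ i * 1 + (1 - p $ i) * 1"
    by (intro add_mono mult_left_mono) (use a pi in auto)
  then show ?case using a pi by simp
next
  case (Const c t1 t0)
  from Const have a: "0 \<le> factory_prob t1 p" "factory_prob t1 p \<le> 1"
     "0 \<le> factory_prob t0 p" "factory_prob t0 p \<le> 1" and c: "0 < c" "c < 1" by auto
  have "c * factory_prob t1 p + (1 - c) * factory_prob t0 p \<le> c * 1 + (1 - c) * 1"
    by (intro add_mono mult_left_mono) (use a c in auto)
  then show ?case using a c by simp
qed

lemma prob_cont: "continuous_on S (factory_prob t)"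
proof (induction t)
  case (Leaf b) then show ?case by simp
next
  case (Coin i t1 t0)
  have "continuous_on S (\<lambda>p. p $ i * factory_prob t1 p + (1 - p $ i) * factory_prob t0 p)"
    using Coin by (intro continuous_intros) auto
  then show ?case by simp
next
  case (Const c t1 t0)
  have "continuous_on S (\<lambda>p. c * factory_prob t1 p + (1 - c) * factory_prob t0 p)"
    using Const by (intro continuous_intros) auto
  then show ?case by simp
qed

fun bin_tree :: "'n \<Rightarrow> nat \<Rightarrow> (nat \<Rightarrow> 'n factory) \<Rightarrow> 'n factory" where
  "bin_tree i 0 lf = lf 0"
| "bin_tree i (Suc N) lf = Coin i (bin_tree i N (\<lambda>k. lf (Suc k))) (bin_tree i N lf)"

lemma valid_bin_tree: "(\<And>k. valid_factory (lf k)) \<Longrightarrow> valid_factory (bin_tree i N lf)"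
  by (induction N arbitrary: lf) auto

lemma Bernstein_Suc:
  "Bernstein (Suc N) (Suc k) x = x * Bernstein N k x + (1 - x) * Bernstein N (Suc k) x"
proof (cases "k < N")
  case True
  then have "N - k = Suc (N - Suc k)" by simp
  then show ?thesis by (simp add: Bernstein_def algebra_simps)
next
  case False
  then consider "k = N" | "N < k" by linarith
  then show ?thesis
  proof cases
    case 1 then show ?thesis by (simp add: Bernstein_def)
  next
    case 2 then have "Bernstein (Suc N) (Suc k) x = 0" "Bernstein N k x = 0" "Bernstein N (Suc k) x = 0"
      by (simp_all add: Bernstein_def binomial_eq_0 del: binomial_Suc_Suc)
    then show ?thesis by simp
  qed
qed

lemma sum_Bernstein_Suc:
  "(\<Sum>k\<le>Suc N. Bernstein (Suc N) k x * a k)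
     = x * (\<Sum>k\<le>N. Bernstein N k x * a (Suc k)) + (1 - x) * (\<Sum>k\<le>N. Bernstein N k x * a k)"
proof -
  have e1: "(\<Sum>k\<le>Suc N. Bernstein (Suc N) k x * a k)
      = Bernstein (Suc N) 0 x * a 0 + (\<Sum>k\<le>N. Bernstein (Suc N) (Suc k) x * a (Suc k))"
    by (subst sum.atMost_Suc_shift) simp
  have e2: "(\<Sum>k\<le>N. Bernstein (Suc N) (Suc k) x * a (Suc k)) = x * (\<Sum>k\<le>N. Bernstein N k x * a (Suc k))
       + (1 - x) * (\<Sum>k\<le>N. Bernstein N (Suc k) x * a (Suc k))"
    by (simp add: Bernstein_Suc distrib_right sum.distrib sum_distrib_left mult.assoc)
  have e3: "(\<Sum>k\<le>Suc N. Bernstein N k x * a k) = Bernstein N 0 x * a 0 + (\<Sum>k\<le>N. Bernstein N (Suc k) x * a (Suc k))"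
    by (subst sum.atMost_Suc_shift) simp
  have e4: "(\<Sum>k\<le>Suc N. Bernstein N k x * a k) = (\<Sum>k\<le>N. Bernstein N k x * a k)"
    by (simp add: Bernstein_def)
  have e5: "Bernstein (Suc N) 0 x = (1 - x) * Bernstein N 0 x"
    by (simp add: Bernstein_def)
  show ?thesis unfolding e1 e2 e5 e4[symmetric] e3 by (simp add: algebra_simps)
qed

lemma prob_bin_tree:
  "factory_prob (bin_tree i N lf) p = (\<Sum>k\<le>N. Bernstein N k (p $ i) * factory_prob (lf k) p)"
proof (induction N arbitrary: lf)
  case 0 then show ?case by (simp add: Bernstein_def)
next
  case (Suc N)
  show ?case by (simp only: bin_tree.simps factory_prob.simps Suc sum_Bernstein_Suc)
qed


fun multi :: "'n list \<Rightarrow> nat \<Rightarrow> ('n \<Rightarrow> nat) \<Rightarrow> (('n \<Rightarrow> nat) \<Rightarrow> real) \<Rightarrow> 'n factory" where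
  "multi [] N kv h = bern_leaf (h kv)"
| "multi (i # is) N kv h = bin_tree i N (\<lambda>k. multi is N (kv(i := k)) h)"

lemma valid_multi: "valid_factory (multi is N kv h)"
  by (induction "is" arbitrary: kv) (auto intro: valid_bin_tree valid_bern_leaf)

lemma prob_multi_Cons:
  "factory_prob (multi (i # is) N kv h) p
     = (\<Sum>k\<le>N. Bernstein N k (p $ i) * factory_prob (multi is N (kv(i := k)) h) p)"
  by (simp add: prob_bin_tree)

lemma prob_multi_compl:
  assumes "\<forall>k. 0 \<le> h k \<and> h k \<le> 1"
  shows "factory_prob (multi is N kv (\<lambda>k. 1 - h k)) p = 1 - factory_prob (multi is N kv h) p"
proof (induction "is" arbitrary: kv)
  case Nil
  then show ?case using assms by (simp add: prob_bern_leaf)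
next
  case (Cons i "is")
  have "factory_prob (multi (i # is) N kv (\<lambda>k. 1 - h k)) p
     = (\<Sum>k\<le>N. Bernstein N k (p $ i) * (1 - factory_prob (multi is N (kv(i := k)) h) p))"
    by (simp only: prob_multi_Cons Cons)
  also have "\<dots> = (\<Sum>k\<le>N. Bernstein N k (p $ i)) - (\<Sum>k\<le>N. Bernstein N k (p $ i) * factory_prob (multi is N (kv(i := k)) h) p)"
    by (simp add: algebra_simps sum_subtractf)
  finally show ?case by (simp add: prob_bin_tree)
qed

lemma Bernstein_sum_le1:
  assumes "0 \<le> x" "x \<le> 1"
  shows "(\<Sum>k\<in>{k\<in>{..N}. P k}. Bernstein N k x) \<le> 1"
proof -
  have "(\<Sum>k\<in>{k\<in>{..N}. P k}. Bernstein N k x) \<le> (\<Sum>k\<le>N. Bernstein N k x)"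
    by (rule sum_mono2) (use assms in \<open>auto simp: Bernstein_nonneg\<close>)
  then show ?thesis by simp
qed

lemma UB:
  assumes "distinct is" "p \<in> unit_cube" "0 \<le> e" "\<forall>k. 0 \<le> h k \<and> h k \<le> 1"
    and "\<forall>i. kv i \<le> N"
    and "\<forall>k. (\<forall>i. k i \<le> N) \<longrightarrow> (\<forall>i. i \<notin> set is \<longrightarrow> k i = kv i) \<longrightarrow>
              (\<forall>i\<in>set is. \<not> bad i (k i)) \<longrightarrow> h k \<le> e"
  shows "factory_prob (multi is N kv h) p
           \<le> e + (\<Sum>i\<in>set is. \<Sum>k\<in>{k\<in>{..N}. bad i k}. Bernstein N k (p $ i))"
  using assms(1,5,6)
proof (induction "is" arbitrary: kv)
  case Nil
  then have "h kv \<le> e" by auto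
  then show ?case using assms(4) by (simp add: prob_bern_leaf)
next
  case (Cons i "is")
  have p01: "0 \<le> p $ j" "p $ j \<le> 1" for j using assms(2) by (auto simp: unit_cube_def)
  define S where "S = (\<Sum>i\<in>set is. \<Sum>k\<in>{k\<in>{..N}. bad i k}. Bernstein N k (p $ i))"
  define \<beta> where "\<beta> = (\<Sum>k\<in>{k\<in>{..N}. bad i k}. Bernstein N k (p $ i))"
  have S0: "0 \<le> S" unfolding S_def by (intro sum_nonneg) (auto intro: Bernstein_nonneg p01)
  have inot: "i \<notin> set is" and dis: "distinct is" using Cons.prems by auto
  have bnd: "factory_prob (multi is N (kv(i := k)) h) p \<le> (if bad i k then 1 else e + S)" if "k \<le> N" for k
  proof (cases "bad i k")
    case True
    then show ?thesis using prob_range[OF valid_multi assms(2)] by simp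
  next
    case False
    have "factory_prob (multi is N (kv(i := k)) h) p \<le> e + S"
      unfolding S_def
    proof (rule Cons.IH[OF dis])
      show "\<forall>j. (kv(i := k)) j \<le> N" using Cons.prems(2) that by auto
      show "\<forall>k'. (\<forall>j. k' j \<le> N) \<longrightarrow> (\<forall>j. j \<notin> set is \<longrightarrow> k' j = (kv(i := k)) j) \<longrightarrow>
              (\<forall>j\<in>set is. \<not> bad j (k' j)) \<longrightarrow> h k' \<le> e"
      proof (intro allI impI)
        fix k' assume a: "\<forall>j. k' j \<le> N" "\<forall>j. j \<notin> set is \<longrightarrow> k' j = (kv(i := k)) j"
          "\<forall>j\<in>set is. \<not> bad j (k' j)"
        have "k' i = k" using a(2) inot by auto
        then show "h k' \<le> e" using Cons.prems(3) a False inot by auto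
      qed
    qed
    then show ?thesis using False by simp
  qed
  have "factory_prob (multi (i # is) N kv h) p
      \<le> (\<Sum>k\<le>N. Bernstein N k (p $ i) * (if bad i k then 1 else e + S))"
    unfolding prob_multi_Cons
    by (intro sum_mono mult_left_mono bnd) (auto intro: Bernstein_nonneg p01)
  also have "\<dots> \<le> (\<Sum>k\<le>N. Bernstein N k (p $ i) * (e + S) + Bernstein N k (p $ i) * (if bad i k then 1 else 0))"
    by (intro sum_mono) (use S0 assms(3) in \<open>auto intro!: mult_nonneg_nonneg Bernstein_nonneg p01\<close>)
  also have "\<dots> = (e + S) + (\<Sum>k\<le>N. if bad i k then Bernstein N k (p $ i) else 0)"
    unfolding sum.distrib sum_distrib_right[symmetric] by (simp add: if_distrib cong: if_cong)
  also have "\<dots> = (e + S) + \<beta>"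
    unfolding \<beta>_def by (subst sum.inter_filter[symmetric]) simp_all
  also have "\<dots> = e + (\<Sum>i\<in>set (i # is). \<Sum>k\<in>{k\<in>{..N}. bad i k}. Bernstein N k (p $ i))"
    using inot by (simp add: S_def \<beta>_def)
  finally show ?case .
qed


lemma Bernstein_cheb:
  assumes "0 < \<eta>" "0 \<le> x" "x \<le> 1" "0 < N"
  shows "(\<Sum>k\<in>{k\<in>{..N}. \<eta> \<le> \<bar>real k / real N - x\<bar>}. Bernstein N k x) \<le> 1 / (4 * real N * \<eta>\<^sup>2)"
proof -
  have sum_bern: "(\<Sum>k\<le>N. (x - k/N)\<^sup>2 * Bernstein N k x) = x * (1 - x) / N"
  proof -
    have *: "\<And>a b x::real. (a - b)\<^sup>2 * x = a * (a - 1) * x + (1 - 2 * b) * a * x + b * b * x"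
      by (simp add: algebra_simps power2_eq_square)
    have "(\<Sum>k\<le>N. (k - N * x)\<^sup>2 * Bernstein N k x) = N * x * (1 - x)"
      apply (simp add: * sum.distrib)
      apply (simp flip: sum_distrib_left add: mult.assoc)
      apply (simp add: algebra_simps power2_eq_square)
      done
    then have "(\<Sum>k\<le>N. (k - N * x)\<^sup>2 * Bernstein N k x)/N^2 = x * (1 - x) / N"
      by (simp add: power2_eq_square)
    then show ?thesis
      using assms by (simp add: sum_divide_distrib field_split_simps power2_commute)
  qed
  have "(\<Sum>k\<in>{k\<in>{..N}. \<eta> \<le> \<bar>real k / real N - x\<bar>}. Bernstein N k x)
      \<le> (\<Sum>k\<in>{k\<in>{..N}. \<eta> \<le> \<bar>real k / real N - x\<bar>}. (x - k/N)\<^sup>2 / \<eta>\<^sup>2 * Bernstein N k x)"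
  proof (rule sum_mono)
    fix k assume "k \<in> {k\<in>{..N}. \<eta> \<le> \<bar>real k / real N - x\<bar>}"
    then have "\<eta> \<le> \<bar>x - real k / real N\<bar>" by auto
    then have "\<eta>\<^sup>2 \<le> (x - k/N)\<^sup>2"
      by (metis abs_ge_zero assms(1) less_le_trans order_less_imp_le power2_abs power_mono)
    then have "1 \<le> (x - k/N)\<^sup>2 / \<eta>\<^sup>2" using assms(1) by auto
    then show "Bernstein N k x \<le> (x - k/N)\<^sup>2 / \<eta>\<^sup>2 * Bernstein N k x"
      using mult_right_mono[OF \<open>1 \<le> _\<close> Bernstein_nonneg[OF assms(2,3)]] by simp
  qed
  also have "\<dots> \<le> (\<Sum>k\<le>N. (x - k/N)\<^sup>2 / \<eta>\<^sup>2 * Bernstein N k x)"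
    by (rule sum_mono2) (use assms in \<open>auto intro!: mult_nonneg_nonneg divide_nonneg_nonneg Bernstein_nonneg\<close>)
  also have "\<dots> = x * (1 - x) / N / \<eta>\<^sup>2"
    by (simp add: sum_bern[symmetric] sum_divide_distrib)
  also have "\<dots> \<le> 1 / (4 * real N * \<eta>\<^sup>2)"
  proof -
    have "0 \<le> (x - 1/2)\<^sup>2" by simp
    then have "x * (1 - x) \<le> 1/4" by (simp add: power2_eq_square algebra_simps)
    moreover have "0 \<le> 1 / (real N * \<eta>\<^sup>2)" by simp
    ultimately have "x * (1 - x) * (1 / (real N * \<eta>\<^sup>2)) \<le> 1/4 * (1 / (real N * \<eta>\<^sup>2))"
      by (rule mult_right_mono)
    then show ?thesis by simp
  qed
  finally show ?thesis .
qed


lemma Bernstein_tail_hi: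
  assumes "0 \<le> x" "x \<le> 1"
  shows "(\<Sum>k\<in>{k\<in>{..N}. R \<le> k}. Bernstein N k x) \<le> 2 ^ N * x ^ R"
proof -
  have "(\<Sum>k\<in>{k\<in>{..N}. R \<le> k}. Bernstein N k x) \<le> (\<Sum>k\<in>{k\<in>{..N}. R \<le> k}. real (N choose k) * x ^ R)"
  proof (rule sum_mono)
    fix k assume k: "k \<in> {k\<in>{..N}. R \<le> k}"
    have "x ^ k \<le> x ^ R" using k assms by (auto intro: power_decreasing)
    moreover have "(1 - x) ^ (N - k) \<le> 1" using assms by (auto intro: power_le_one)
    ultimately have "x ^ k * (1 - x) ^ (N - k) \<le> x ^ R * 1"
      by (intro mult_mono) (use assms in auto)
    then show "Bernstein N k x \<le> real (N choose k) * x ^ R"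
      unfolding Bernstein_def by (simp add: mult.assoc mult_left_mono)
  qed
  also have "\<dots> \<le> (\<Sum>k\<le>N. real (N choose k) * x ^ R)"
    by (rule sum_mono2) (use assms in auto)
  also have "\<dots> = 2 ^ N * x ^ R"
    by (simp add: sum_distrib_right[symmetric] of_nat_sum[symmetric] choose_row_sum del: of_nat_sum)
  finally show ?thesis .
qed

lemma Bernstein_tail_lo:
  assumes "0 \<le> x" "x \<le> 1"
  shows "(\<Sum>k\<in>{k\<in>{..N}. k + R \<le> N}. Bernstein N k x) \<le> 2 ^ N * (1 - x) ^ R"
proof -
  have "(\<Sum>k\<in>{k\<in>{..N}. k + R \<le> N}. Bernstein N k x) \<le> (\<Sum>k\<in>{k\<in>{..N}. k + R \<le> N}. real (N choose k) * (1 - x) ^ R)"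
  proof (rule sum_mono)
    fix k assume k: "k \<in> {k\<in>{..N}. k + R \<le> N}"
    have "(1 - x) ^ (N - k) \<le> (1 - x) ^ R" using k assms by (auto intro: power_decreasing)
    moreover have "x ^ k \<le> 1" using assms by (auto intro: power_le_one)
    ultimately have "x ^ k * (1 - x) ^ (N - k) \<le> 1 * (1 - x) ^ R"
      by (intro mult_mono) (use assms in auto)
    then show "Bernstein N k x \<le> real (N choose k) * (1 - x) ^ R"
      unfolding Bernstein_def by (simp add: mult.assoc mult_left_mono)
  qed
  also have "\<dots> \<le> (\<Sum>k\<le>N. real (N choose k) * (1 - x) ^ R)"
    by (rule sum_mono2) (use assms in auto)
  also have "\<dots> = 2 ^ N * (1 - x) ^ R"
    by (simp add: sum_distrib_right[symmetric] of_nat_sum[symmetric] choose_row_sum del: of_nat_sum)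
  finally show ?thesis .
qed


definition idx :: "'n::finite list" where
  "idx = (SOME xs. set xs = UNIV \<and> distinct xs)"

lemma idx: "set (idx :: 'n::finite list) = UNIV" "distinct (idx :: 'n::finite list)"
proof -
  have "\<exists>xs::'n list. set xs = UNIV \<and> distinct xs" by (rule finite_distinct_list) simp
  then have "set (idx :: 'n list) = UNIV \<and> distinct (idx :: 'n list)"
    unfolding idx_def by (rule someI_ex)
  then show "set (idx :: 'n::finite list) = UNIV" "distinct (idx :: 'n::finite list)" by auto
qed

definition Yv :: "nat \<Rightarrow> ('n \<Rightarrow> nat) \<Rightarrow> real ^ 'n" where
  "Yv N k = (\<chi> i. real (k i) / real N)"

definition gfac :: "nat \<Rightarrow> (('n::finite \<Rightarrow> nat) \<Rightarrow> real) \<Rightarrow> 'n factory" where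
  "gfac N h = multi idx N (\<lambda>_. 0) h"

definition wt :: "'n set \<Rightarrow> 'n set \<Rightarrow> 'n set \<Rightarrow> real ^ 'n \<Rightarrow> real" where
  "wt A S B p = (\<Prod>i\<in>A. 1 - p $ i) * (\<Prod>i\<in>S. p $ i) * (\<Prod>i\<in>S. 1 - p $ i) * (\<Prod>i\<in>B. p $ i)"

lemma UB_top:
  fixes p :: "real ^ 'n::finite"
  assumes "p \<in> unit_cube" "0 \<le> e" "\<forall>k. 0 \<le> h k \<and> h k \<le> 1"
    and "\<forall>k. (\<forall>i. k i \<le> N) \<longrightarrow> (\<forall>i. \<not> bad i (k i)) \<longrightarrow> h k \<le> e"
  shows "factory_prob (gfac N h) p \<le> e + (\<Sum>i\<in>UNIV. \<Sum>k\<in>{k\<in>{..N}. bad i k}. Bernstein N k (p $ i))"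
proof -
  have "factory_prob (multi idx N (\<lambda>_. 0) h) p
       \<le> e + (\<Sum>i\<in>set idx. \<Sum>k\<in>{k\<in>{..N}. bad i k}. Bernstein N k (p $ i))"
    by (rule UB) (use assms in \<open>auto simp: idx\<close>)
  then show ?thesis unfolding gfac_def idx by simp
qed

lemma prob_gfac_range: "p \<in> unit_cube \<Longrightarrow> 0 \<le> factory_prob (gfac N h) p \<and> factory_prob (gfac N h) p \<le> 1"
  unfolding gfac_def by (rule prob_range[OF valid_multi])

lemma prob_gfac_compl:
  "\<forall>k. 0 \<le> h k \<and> h k \<le> 1 \<Longrightarrow> factory_prob (gfac N (\<lambda>k. 1 - h k)) p = 1 - factory_prob (gfac N h) p"
  unfolding gfac_def by (rule prob_multi_compl)

lemma w_lower:
  fixes p :: "real ^ 'n::finite"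
  assumes "0 \<le> s" "s \<le> 1" "\<forall>i\<in>A. s \<le> 1 - p $ i" "\<forall>i\<in>S. s \<le> p $ i \<and> s \<le> 1 - p $ i"
    "\<forall>i\<in>B. s \<le> p $ i"
  shows "s ^ (4 * CARD('n)) \<le> wt A S B p"
proof -
  have pw: "s ^ CARD('n) \<le> s ^ card X" for X :: "'n set"
    by (rule power_decreasing) (use assms in \<open>auto intro: card_mono\<close>)
  have a: "s ^ CARD('n) \<le> (\<Prod>i\<in>A. 1 - p $ i)"
    using pw[of A] prod_mono[of A "\<lambda>_. s" "\<lambda>i. 1 - p $ i"] assms by auto
  have b: "s ^ CARD('n) \<le> (\<Prod>i\<in>S. p $ i)"
    using pw[of S] prod_mono[of S "\<lambda>_. s" "\<lambda>i. p $ i"] assms by auto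
  have c: "s ^ CARD('n) \<le> (\<Prod>i\<in>S. 1 - p $ i)"
    using pw[of S] prod_mono[of S "\<lambda>_. s" "\<lambda>i. 1 - p $ i"] assms by auto
  have d: "s ^ CARD('n) \<le> (\<Prod>i\<in>B. p $ i)"
    using pw[of B] prod_mono[of B "\<lambda>_. s" "\<lambda>i. p $ i"] assms by auto
  have s0: "0 \<le> s ^ CARD('n)" using assms by simp
  have "s ^ CARD('n) * s ^ CARD('n) * s ^ CARD('n) * s ^ CARD('n) \<le> wt A S B p"
    unfolding wt_def
    by (intro mult_mono a b c d mult_nonneg_nonneg s0 order.trans[OF s0 a] order.trans[OF s0 b]
         order.trans[OF s0 c])
  moreover have "s ^ (4 * CARD('n)) = s ^ CARD('n) * s ^ CARD('n) * s ^ CARD('n) * s ^ CARD('n)"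
  proof -
    have "4 * CARD('n) = CARD('n) + CARD('n) + CARD('n) + CARD('n)" by simp
    then show ?thesis by (simp only: power_add)
  qed
  ultimately show ?thesis by simp
qed

definition Fa :: "real ^ 'n \<Rightarrow> real \<Rightarrow> 'n set" where "Fa p t = {i. p $ i \<le> t}"
definition Fb :: "real ^ 'n \<Rightarrow> real \<Rightarrow> 'n set" where "Fb p t = {i. 1 - t \<le> p $ i} - Fa p t"
definition Fs :: "real ^ 'n \<Rightarrow> real \<Rightarrow> 'n set" where "Fs p t = UNIV - Fa p t - Fb p t"

lemma part_F: "is_partition3 (Fa p t) (Fs p t) (Fb p t)"
  unfolding is_partition3_def Fa_def Fb_def Fs_def by auto

lemma tail_bound:
  fixes f :: "real ^ 'n::finite \<Rightarrow> real" and p :: "real ^ 'n"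
  assumes L: "0 < L" and R: "0 < R" and p: "p \<in> unit_cube" and t: "0 \<le> t"
    and hL: "\<forall>x\<in>unit_cube. \<forall>y\<in>unit_cube. (\<forall>i. \<bar>x$i - y$i\<bar> \<le> 1 / real L) \<longrightarrow> \<bar>f x - f y\<bar> < \<delta>"
    and Z: "\<not> (\<exists>q\<in>open_face (Fa p t) (Fs p t) (Fb p t). f q \<noteq> 0)"
    and h01: "\<forall>k. 0 \<le> h k \<and> h k \<le> 1"
    and hz: "\<forall>k. f (Yv (L*R) k) < \<delta> \<longrightarrow> h k = 0"
  shows "factory_prob (gfac (L*R) h) p \<le> real CARD('n) * 2 ^ (L*R) * t ^ R"
proof -
  define N where "N = L * R"
  have N0: "0 < N" using L R by (simp add: N_def)
  have p01: "0 \<le> p $ i" "p $ i \<le> 1" for i using p by (auto simp: unit_cube_def)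
  define bad where "bad i k \<longleftrightarrow> (i \<in> Fa p t \<and> R \<le> k) \<or> (i \<in> Fb p t \<and> k + R \<le> N)" for i k
  have hyp: "\<forall>k. (\<forall>i. k i \<le> N) \<longrightarrow> (\<forall>i. \<not> bad i (k i)) \<longrightarrow> h k \<le> 0"
  proof (intro allI impI)
    fix k assume kN: "\<forall>i. k i \<le> N" and nb: "\<forall>i. \<not> bad i (k i)"
    define Y where "Y = Yv N k"
    define lam where "lam = 1 / real L"
    have lam: "0 < lam" "lam \<le> 1" using L by (auto simp: lam_def)
    have Yi: "Y $ i = real (k i) / real N" for i by (simp add: Y_def Yv_def)
    have Y01: "0 \<le> Y $ i" "Y $ i \<le> 1" for i using kN N0 by (auto simp: Yi field_simps)
    define z where "z = (\<chi> i. if i \<in> Fa p t then 0 else if i \<in> Fb p t then 1 else (1 - lam) * Y $ i + lam / 2)"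
    have zS: "0 < (1 - lam) * Y $ i + lam / 2" "(1 - lam) * Y $ i + lam / 2 < 1" for i
    proof -
      have "0 \<le> (1 - lam) * Y $ i" using lam Y01 by simp
      then show "0 < (1 - lam) * Y $ i + lam / 2" using lam by simp
      have "(1 - lam) * Y $ i \<le> (1 - lam) * 1" using lam Y01 by (intro mult_left_mono) auto
      then show "(1 - lam) * Y $ i + lam / 2 < 1" using lam by simp
    qed
    have zf: "z \<in> open_face (Fa p t) (Fs p t) (Fb p t)"
      unfolding open_face_def z_def using zS by (auto simp: Fs_def Fb_def)
    then have fz: "f z = 0" using Z by auto
    have Ycube: "Y \<in> unit_cube" using Y01 by (auto simp: unit_cube_def)
    have zcube: "z \<in> unit_cube" using zS by (auto simp: unit_cube_def z_def less_imp_le)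
    have RN: "real R / real N = lam" using L R by (simp add: N_def lam_def)
    have close: "\<bar>Y $ i - z $ i\<bar> \<le> 1 / real L" for i
    proof (cases "i \<in> Fa p t")
      case True
      then have "k i < R" using nb[rule_format, of i] by (auto simp: bad_def)
      then have "real (k i) / real N \<le> real R / real N" using N0 by (intro divide_right_mono) auto
      then show ?thesis using True Y01[of i] RN by (simp add: z_def Yi lam_def)
    next
      case nA: False
      show ?thesis
      proof (cases "i \<in> Fb p t")
        case True
        then have "N < k i + R" using nb[rule_format, of i] by (auto simp: bad_def)
        then have "real N \<le> real (k i) + real R" by linarith
        then have "1 \<le> real (k i) / real N + real R / real N" using N0
          by (simp add: add_divide_distrib[symmetric])
        then show ?thesis using True nA Y01[of i] RN by (simp add: z_def Yi lam_def)
      next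
        case False
        have "\<bar>Y $ i - z $ i\<bar> = \<bar>lam * (Y $ i - 1/2)\<bar>" using False nA
          by (simp add: z_def algebra_simps)
        also have "\<dots> = lam * \<bar>Y $ i - 1/2\<bar>" using lam by (simp add: abs_mult)
        also have "\<dots> \<le> lam * 1" using Y01[of i] lam by (intro mult_left_mono) auto
        finally show ?thesis by (simp add: lam_def)
      qed
    qed
    have "\<bar>f Y - f z\<bar> < \<delta>" using hL Ycube zcube close by blast
    then have "f (Yv (L*R) k) < \<delta>" using fz by (simp add: Y_def N_def)
    then show "h k \<le> 0" using hz by auto
  qed
  have "factory_prob (gfac N h) p \<le> 0 + (\<Sum>i\<in>UNIV. \<Sum>k\<in>{k\<in>{..N}. bad i k}. Bernstein N k (p $ i))"
    by (rule UB_top[OF p _ h01 hyp]) simp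
  also have "\<dots> \<le> (\<Sum>i\<in>(UNIV::'n set). 2 ^ N * t ^ R)"
    unfolding add_0_left
  proof (rule sum_mono)
    fix i :: 'n
    assume "i \<in> UNIV"
    show "(\<Sum>k\<in>{k\<in>{..N}. bad i k}. Bernstein N k (p $ i)) \<le> 2 ^ N * t ^ R"
    proof (cases "i \<in> Fa p t")
      case True
      then have eq: "{k\<in>{..N}. bad i k} = {k\<in>{..N}. R \<le> k}" by (auto simp: bad_def Fb_def)
      have le: "2 ^ N * p $ i ^ R \<le> (2::real) ^ N * t ^ R"
        using True p01[of i] by (intro mult_left_mono power_mono) (auto simp: Fa_def)
      show ?thesis unfolding eq using order.trans[OF Bernstein_tail_hi[OF p01[of i], of N R] le] .
    next
      case nA: False
      show ?thesis
      proof (cases "i \<in> Fb p t")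
        case True
        then have eq: "{k\<in>{..N}. bad i k} = {k\<in>{..N}. k + R \<le> N}" using nA by (auto simp: bad_def)
        have le: "2 ^ N * (1 - p $ i) ^ R \<le> (2::real) ^ N * t ^ R"
          using True p01[of i] by (intro mult_left_mono power_mono) (auto simp: Fb_def)
        show ?thesis unfolding eq using order.trans[OF Bernstein_tail_lo[OF p01[of i], of N R] le] .
      next
        case False
        then have eq: "{k\<in>{..N}. bad i k} = {}" using nA by (auto simp: bad_def)
        show ?thesis unfolding eq using t by simp
      qed
    qed
  qed
  also have "\<dots> = real CARD('n) * 2 ^ N * t ^ R" by simp
  finally show ?thesis by (simp add: N_def)
qed


lemma key_ineq:
  fixes c t :: real and n L M R j :: nat
  assumes c: "0 < c" and t: "0 < t" "t \<le> 1 / 2 ^ (L+1)" and RM: "M + j \<le> R"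
    and j: "(1/2::real) ^ j < 2 * c / (real n * 2 ^ (L * M))" and n: "0 < n"
  shows "real n * 2 ^ (L*R) * t ^ R \<le> 2 * c * t ^ M"
proof -
  define q where "q = 2 ^ L * t"
  have q0: "0 < q" using t by (simp add: q_def)
  have q1: "q \<le> 1/2" using t by (simp add: q_def field_simps)
  have "2 ^ (L*R) * t ^ R = q ^ R" by (simp add: q_def power_mult power_mult_distrib)
  also have "q ^ R = q ^ M * q ^ (R - M)" using RM by (simp add: power_add[symmetric])
  also have "q ^ (R - M) \<le> (1/2) ^ (R - M)" using q0 q1 by (intro power_mono) auto
  also have "(1/2::real) ^ (R - M) \<le> (1/2) ^ j" using RM by (intro power_decreasing) auto
  finally have "2 ^ (L*R) * t ^ R \<le> q ^ M * (1/2) ^ j" using q0 by (simp add: mult_left_mono)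
  moreover have "q ^ M = 2 ^ (L*M) * t ^ M" by (simp add: q_def power_mult power_mult_distrib)
  ultimately have a: "2 ^ (L*R) * t ^ R \<le> 2 ^ (L*M) * t ^ M * (1/2) ^ j" by simp
  have "real n * 2 ^ (L * M) * (1/2) ^ j \<le> 2 * c"
  proof -
    have "0 < real n * 2 ^ (L * M)" using n by simp
    then have "real n * 2 ^ (L * M) * (1/2) ^ j < real n * 2 ^ (L * M) * (2 * c / (real n * 2 ^ (L * M)))"
      using j by (intro mult_strict_left_mono) auto
    also have "\<dots> = 2 * c" using n by simp
    finally show ?thesis by simp
  qed
  then have b: "real n * 2 ^ (L * M) * (1/2) ^ j * t ^ M \<le> 2 * c * t ^ M"
    using t by (intro mult_right_mono) auto
  have "real n * 2 ^ (L*R) * t ^ R = real n * (2 ^ (L*R) * t ^ R)" by simp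
  also have "\<dots> \<le> real n * (2 ^ (L*M) * t ^ M * (1/2) ^ j)" using a by (intro mult_left_mono) auto
  also have "\<dots> = real n * 2 ^ (L * M) * (1/2) ^ j * t ^ M" by simp
  also have "\<dots> \<le> 2 * c * t ^ M" by (rule b)
  finally show ?thesis .
qed

lemma near_zero:
  fixes f :: "real ^ 'n::finite \<Rightarrow> real"
  assumes pb: "poly_bounded f" and f0: "\<forall>x\<in>unit_cube. 0 \<le> f x"
    and L: "0 < L"
    and hL: "\<forall>x\<in>unit_cube. \<forall>y\<in>unit_cube. (\<forall>i. \<bar>x$i - y$i\<bar> \<le> 1 / real L) \<longrightarrow> \<bar>f x - f y\<bar> < \<delta>"
  shows "\<exists>\<kappa>>0. \<exists>R0. \<forall>R\<ge>R0. \<forall>h. (\<forall>k. 0 \<le> h k \<and> h k \<le> 1) \<longrightarrow> (\<forall>k. f (Yv (L*R) k) < \<delta> \<longrightarrow> h k = 0) \<longrightarrow>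
           (\<forall>p\<in>unit_cube. f p < \<kappa> \<longrightarrow> factory_prob (gfac (L*R) h) p \<le> 2 * f p)"
proof -
  obtain m c where c0: "c > 0" and pbf: "\<And>A S B p. is_partition3 A S B \<Longrightarrow> (\<exists>q\<in>open_face A S B. f q \<noteq> 0)
      \<Longrightarrow> p \<in> unit_cube \<Longrightarrow> c * wt A S B p ^ m \<le> f p"
    using pb unfolding poly_bounded_def wt_def by blast
  define n where "n = CARD('n)"
  have n0: "0 < n" by (simp add: n_def)
  define M where "M = 4 * n * m"
  define \<tau> :: real where "\<tau> = 1 / 2 ^ (L+1)"
  have \<tau>0: "0 < \<tau>" "\<tau> \<le> 1/2" by (auto simp: \<tau>_def field_simps)
  define \<kappa> where "\<kappa> = c * \<tau> ^ M"
  have \<kappa>0: "0 < \<kappa>" using c0 \<tau>0 by (simp add: \<kappa>_def)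
  obtain j where j: "(1/2::real) ^ j < 2 * c / (real n * 2 ^ (L * M))"
    using real_arch_pow_inv[of "2 * c / (real n * 2 ^ (L * M))" "1/2"] c0 n0 by auto
  have main: "factory_prob (gfac (L*R) h) p \<le> 2 * f p"
    if R: "M + j + 1 \<le> R" and h01: "\<forall>k. 0 \<le> h k \<and> h k \<le> 1"
      and hz: "\<forall>k. f (Yv (L*R) k) < \<delta> \<longrightarrow> h k = 0"
      and p: "p \<in> unit_cube" and fp: "f p < \<kappa>" for R h p
  proof -
    have R0: "0 < R" using R by simp
    have p01: "0 \<le> p $ i" "p $ i \<le> 1" for i using p by (auto simp: unit_cube_def)
    define D0 where "D0 = {0, 1/2} \<union> range (\<lambda>i. min (p $ i) (1 - p $ i))"
    have fD: "finite D0" by (simp add: D0_def)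
    have D01: "0 \<le> t \<and> t \<le> 1/2" if "t \<in> D0" for t
      using that p01 by (auto simp: D0_def min_def)
    define isZ where "isZ t \<longleftrightarrow> \<not> (\<exists>q\<in>open_face (Fa p t) (Fs p t) (Fb p t). f q \<noteq> 0)" for t
    have nonZ: "c * wt (Fa p t) (Fs p t) (Fb p t) p ^ m \<le> f p" if "\<not> isZ t" for t
      using pbf[OF part_F _ p] that unfolding isZ_def by blast
    have lowc: "c * s ^ M \<le> f p" if "\<not> isZ t" "0 \<le> s" "s \<le> 1"
      "s ^ (4 * n) \<le> wt (Fa p t) (Fs p t) (Fb p t) p" for s t
    proof -
      have "c * s ^ M = c * (s ^ (4 * n)) ^ m" by (simp add: M_def power_mult)
      also have "\<dots> \<le> c * wt (Fa p t) (Fs p t) (Fb p t) p ^ m"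
        using that c0 by (intro mult_left_mono power_mono) auto
      also have "\<dots> \<le> f p" by (rule nonZ[OF that(1)])
      finally show ?thesis .
    qed
    define Zset where "Zset = {t\<in>D0. isZ t}"
    show ?thesis
    proof (cases "Zset = {}")
      case True
      have "1/2 \<in> D0" by (simp add: D0_def)
      then have nz: "\<not> isZ (1/2)" using True unfolding Zset_def by blast
      have "(1/2) ^ (4 * n) \<le> wt (Fa p (1/2)) (Fs p (1/2)) (Fb p (1/2)) p"
        unfolding n_def by (rule w_lower) (auto simp: Fa_def Fb_def Fs_def)
      then have "c * (1/2) ^ M \<le> f p" by (intro lowc[OF nz]) auto
      moreover have "c * \<tau> ^ M \<le> c * (1/2) ^ M" using \<tau>0 c0 by (intro mult_left_mono power_mono) auto
      ultimately have False using fp by (simp add: \<kappa>_def)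
      then show ?thesis ..
    next
      case False
      define ts where "ts = Min Zset"
      have fZ: "finite Zset" using fD by (simp add: Zset_def)
      have tsZ: "ts \<in> Zset" using False fZ by (simp add: ts_def)
      have tsmin: "ts \<le> t" if "t \<in> Zset" for t using fZ that by (simp add: ts_def)
      have ts01: "0 \<le> ts" "ts \<le> 1/2" using tsZ D01 by (auto simp: Zset_def)
      have tail: "factory_prob (gfac (L*R) h) p \<le> real n * 2 ^ (L*R) * ts ^ R"
        unfolding n_def
        by (rule tail_bound[OF L R0 p ts01(1) hL _ h01 hz]) (use tsZ in \<open>auto simp: Zset_def isZ_def\<close>)
      show ?thesis
      proof (cases "ts = 0")
        case True
        have "real n * 2 ^ (L*R) * ts ^ R = 0" using True R0 by simp
        then have "factory_prob (gfac (L*R) h) p \<le> 0" using tail by linarith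
        then show ?thesis using f0 p by fastforce
      next
        case tsn0: False
        then have ts0: "0 < ts" using ts01 by simp
        define Below where "Below = {t\<in>D0. t < ts}"
        have fB: "finite Below" using fD by (simp add: Below_def)
        have 0: "0 \<in> Below" using ts0 by (simp add: Below_def D0_def)
        define t' where "t' = Max Below"
        have t'B: "t' \<in> Below" unfolding t'_def using fB 0 by (intro Max_in) auto
        have t'max: "t \<le> t'" if "t \<in> Below" for t using fB that by (simp add: t'_def)
        have t'lt: "t' < ts" and t'D: "t' \<in> D0" using t'B by (auto simp: Below_def)
        have nzt': "\<not> isZ t'"
        proof
          assume "isZ t'"
          then have "t' \<in> Zset" using t'D by (simp add: Zset_def)
          then show False using tsmin t'lt by fastforce
        qed
        have wl: "ts ^ (4 * n) \<le> wt (Fa p t') (Fs p t') (Fb p t') p"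
          unfolding n_def
        proof (rule w_lower)
          show "0 \<le> ts" "ts \<le> 1" using ts01 by auto
          show "\<forall>i\<in>Fa p t'. ts \<le> 1 - p $ i" using t'lt ts01 by (auto simp: Fa_def)
          show "\<forall>i\<in>Fb p t'. ts \<le> p $ i" using t'lt ts01 by (auto simp: Fb_def)
          show "\<forall>i\<in>Fs p t'. ts \<le> p $ i \<and> ts \<le> 1 - p $ i"
          proof
            fix i assume "i \<in> Fs p t'"
            then have a: "t' < p $ i" "p $ i < 1 - t'" by (auto simp: Fs_def Fa_def Fb_def)
            define d where "d = min (p $ i) (1 - p $ i)"
            have dD: "d \<in> D0" by (auto simp: D0_def d_def)
            have "t' < d" using a by (simp add: d_def)
            then have "\<not> d < ts" using t'max[of d] dD by (auto simp: Below_def)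
            then show "ts \<le> p $ i \<and> ts \<le> 1 - p $ i" by (auto simp: d_def)
          qed
        qed
        have fts: "c * ts ^ M \<le> f p" using lowc[OF nzt' _ _ wl] ts01 by auto
        show ?thesis
        proof (cases "ts \<le> \<tau>")
          case True
          have "real n * 2 ^ (L*R) * ts ^ R \<le> 2 * c * ts ^ M"
            by (rule key_ineq[OF c0 ts0 True[unfolded \<tau>_def] _ j n0]) (use R in simp)
          then show ?thesis using tail fts by linarith
        next
          case False
          then have "c * \<tau> ^ M \<le> c * ts ^ M" using \<tau>0 c0 by (intro mult_left_mono power_mono) auto
          then have False using fts fp by (simp add: \<kappa>_def)
          then show ?thesis ..
        qed
      qed
    qed
  qed
  show ?thesis
    by (rule exI[of _ \<kappa>], rule conjI[OF \<kappa>0], rule exI[of _ "M + j + 1"]) (blast intro: main)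
qed


lemma cube_cbox: "(unit_cube :: (real ^ 'n::finite) set) = cbox 0 1"
  by (auto simp: unit_cube_def mem_box_cart)

lemma ucoord:
  fixes f :: "real ^ 'n::finite \<Rightarrow> real"
  assumes "continuous_on unit_cube f" "0 < e"
  shows "\<exists>d>0. \<forall>x\<in>unit_cube. \<forall>y\<in>unit_cube. (\<forall>i. \<bar>x$i - y$i\<bar> \<le> d) \<longrightarrow> \<bar>f x - f y\<bar> < e"
proof -
  have "uniformly_continuous_on unit_cube f"
    using assms(1) by (intro compact_uniformly_continuous) (auto simp: cube_cbox)
  then obtain d0 where d0: "d0 > 0" and
    H: "\<And>x x'. x \<in> unit_cube \<Longrightarrow> x' \<in> unit_cube \<Longrightarrow> dist x' x < d0 \<Longrightarrow> dist (f x') (f x) < e"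
    using uniformly_continuous_onE assms(2) by metis
  define d where "d = d0 / (2 * real CARD('n))"
  have d: "d > 0" using d0 by (simp add: d_def)
  show ?thesis
  proof (intro exI[of _ d] conjI d ballI impI)
    fix x y :: "real ^ 'n" assume x: "x \<in> unit_cube" and y: "y \<in> unit_cube" and c: "\<forall>i. \<bar>x$i - y$i\<bar> \<le> d"
    have "dist x y = norm (x - y)" by (simp add: dist_norm)
    also have "\<dots> \<le> (\<Sum>i\<in>UNIV. \<bar>(x - y) $ i\<bar>)" by (rule norm_le_l1_cart)
    also have "\<dots> \<le> (\<Sum>i\<in>(UNIV::'n set). d)" using c by (intro sum_mono) auto
    also have "\<dots> = d0 / 2" by (simp add: d_def)
    also have "\<dots> < d0" using d0 by simp
    finally have "dist x y < d0" .
    then have "dist (f x) (f y) < e" using H[OF y x] by simp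
    then show "\<bar>f x - f y\<bar> < e" by (simp add: dist_real_def)
  qed
qed

definition psi :: "real \<Rightarrow> real" where "psi t = max 0 (min 1 (2 * t - 1/2))"

lemma psi01: "0 \<le> psi t" "psi t \<le> 1" by (auto simp: psi_def)
lemma psi_lo: "t \<le> 1/4 \<Longrightarrow> psi t = 0" by (auto simp: psi_def)
lemma psi_hi: "3/4 \<le> t \<Longrightarrow> psi t = 1" by (auto simp: psi_def)
lemma psi_le: "0 \<le> t \<Longrightarrow> t \<le> 1/2 \<Longrightarrow> psi t \<le> t" by (auto simp: psi_def)
lemma psi_ge: "1/2 \<le> t \<Longrightarrow> t \<le> 1 \<Longrightarrow> t \<le> psi t" by (auto simp: psi_def)
lemma psi_lip: "\<bar>psi a - psi b\<bar> \<le> 2 * \<bar>a - b\<bar>" by (auto simp: psi_def max_def min_def abs_if)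

lemma approx_ub:
  fixes p :: "real ^ 'n::finite"
  assumes p: "p \<in> unit_cube" and N: "0 < N" and d: "0 < d" and k0: "0 \<le> a" "0 < \<kappa>"
    and h01: "\<forall>k. 0 \<le> h k \<and> h k \<le> 1"
    and hc: "\<forall>k. (\<forall>i. k i \<le> N) \<longrightarrow> (\<forall>i. \<bar>real (k i) / real N - p $ i\<bar> < d) \<longrightarrow> h k \<le> a + \<kappa>/2"
    and Nbig: "real CARD('n) / (2 * \<kappa> * d\<^sup>2) \<le> real N"
  shows "factory_prob (gfac N h) p \<le> a + \<kappa>"
proof -
  have p01: "0 \<le> p $ i" "p $ i \<le> 1" for i using p by (auto simp: unit_cube_def)
  have "factory_prob (gfac N h) p \<le> (a + \<kappa>/2)
     + (\<Sum>i\<in>UNIV. \<Sum>k\<in>{k\<in>{..N}. d \<le> \<bar>real k / real N - p $ i\<bar>}. Bernstein N k (p $ i))"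
    by (rule UB_top[OF p _ h01]) (use k0 hc in \<open>auto simp: not_le\<close>)
  also have "(\<Sum>i\<in>UNIV. \<Sum>k\<in>{k\<in>{..N}. d \<le> \<bar>real k / real N - p $ i\<bar>}. Bernstein N k (p $ i))
      \<le> (\<Sum>i\<in>(UNIV::'n set). 1 / (4 * real N * d\<^sup>2))"
    by (intro sum_mono Bernstein_cheb d p01 N)
  also have "\<dots> \<le> \<kappa> / 2"
  proof -
    have "(\<Sum>i\<in>(UNIV::'n set). 1 / (4 * real N * d\<^sup>2)) = real CARD('n) / (4 * real N * d\<^sup>2)" by simp
    also have "\<dots> \<le> \<kappa> / 2"
      using Nbig d k0 N by (simp add: field_simps)
    finally show ?thesis .
  qed
  finally show ?thesis by simp
qed


lemma face_in_cube: "is_partition3 A S B \<Longrightarrow> q \<in> open_face A S B \<Longrightarrow> q \<in> unit_cube"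
proof -
  assume part: "is_partition3 A S B" and q: "q \<in> open_face A S B"
  have "0 \<le> q $ i \<and> q $ i \<le> 1" for i
  proof -
    have "i \<in> A \<or> i \<in> S \<or> i \<in> B" using part unfolding is_partition3_def by blast
    then show ?thesis using q unfolding open_face_def by auto
  qed
  then show ?thesis by (simp add: unit_cube_def)
qed

lemma pb_transfer:
  fixes f u :: "real ^ 'n::finite \<Rightarrow> real"
  assumes pb: "poly_bounded f"
    and zero: "\<And>q. q \<in> unit_cube \<Longrightarrow> f q = 0 \<Longrightarrow> u q = 0"
    and low: "\<And>p. p \<in> unit_cube \<Longrightarrow> 2/3 * f p \<le> u p"
  shows "poly_bounded u"
proof -
  obtain m c where c0: "c > 0" and pbf: "\<And>A S B p. is_partition3 A S B \<Longrightarrow> (\<exists>q\<in>open_face A S B. f q \<noteq> 0)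
      \<Longrightarrow> p \<in> unit_cube \<Longrightarrow> c * wt A S B p ^ m \<le> f p"
    using pb unfolding poly_bounded_def wt_def by blast
  have H: "\<exists>q\<in>open_face A S B. f q \<noteq> 0" if "is_partition3 A S B" "\<exists>q\<in>open_face A S B. u q \<noteq> 0" for A S B
    using that zero face_in_cube by metis
  have "\<forall>A S B. is_partition3 A S B \<longrightarrow> (\<exists>q\<in>open_face A S B. u q \<noteq> 0) \<longrightarrow>
           (\<forall>p\<in>unit_cube. 2/3 * c * wt A S B p ^ m \<le> u p)"
  proof (intro allI impI ballI)
    fix A S B and p :: "real ^ 'n" assume a: "is_partition3 A S B" "\<exists>q\<in>open_face A S B. u q \<noteq> 0" "p \<in> unit_cube"
    have "c * wt A S B p ^ m \<le> f p" using pbf[OF a(1) H[OF a(1,2)] a(3)] .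
    then have "2/3 * (c * wt A S B p ^ m) \<le> 2/3 * f p" by simp
    then show "2/3 * c * wt A S B p ^ m \<le> u p" using low[OF a(3)] by simp
  qed
  then show ?thesis unfolding poly_bounded_def wt_def
    by (intro exI[of _ m] exI[of _ "2/3 * c"]) (use c0 in auto)
qed

theorem lemma6:
  fixes f :: "real ^ 'n \<Rightarrow> real"
  assumes "continuous_on unit_cube f"
    and "f ` unit_cube \<subseteq> {0..1}"
    and "poly_bounded f"
    and "poly_bounded (\<lambda>p. 1 - f p)"
  shows "\<exists>g :: real ^ 'n \<Rightarrow> real.
           g ` unit_cube \<subseteq> {0..1} \<and> finite_factory_implementable g \<and>
           (let ft = (\<lambda>p. 4/3 * (f p - 1/4 * g p)) in
              ft ` unit_cube \<subseteq> {0..1} \<and> continuous_on unit_cube ft \<and>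
              poly_bounded ft \<and> poly_bounded (\<lambda>p. 1 - ft p))"
proof -
  note cont = assms(1)
  have f01: "0 \<le> f p" "f p \<le> 1" if "p \<in> unit_cube" for p using assms(2) that by auto
  have f0: "\<forall>x\<in>unit_cube. 0 \<le> f x" and f0': "\<forall>x\<in>unit_cube. 0 \<le> 1 - f x" using f01 by auto
  obtain d1 where d1: "d1 > 0" and
    U1: "\<forall>x\<in>unit_cube. \<forall>y\<in>unit_cube. (\<forall>i. \<bar>x$i - y$i\<bar> \<le> d1) \<longrightarrow> \<bar>f x - f y\<bar> < 1/4"
    using ucoord[OF cont, of "1/4"] by auto
  define L where "L = nat \<lceil>1 / d1\<rceil> + 1"
  have L0: "0 < L" by (simp add: L_def)
  have "1 / d1 \<le> real L" unfolding L_def by linarith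
  then have Ld: "1 / real L \<le> d1" using d1 L0 by (simp add: field_simps)
  have hL: "\<forall>x\<in>unit_cube. \<forall>y\<in>unit_cube. (\<forall>i. \<bar>x$i - y$i\<bar> \<le> 1 / real L) \<longrightarrow> \<bar>f x - f y\<bar> < 1/4"
  proof (intro ballI allI impI)
    fix x y :: "real ^ 'n" assume x: "x \<in> unit_cube" and y: "y \<in> unit_cube"
      and c: "\<forall>i. \<bar>x$i - y$i\<bar> \<le> 1 / real L"
    have "\<forall>i. \<bar>x$i - y$i\<bar> \<le> d1" using c Ld by (auto intro: order.trans)
    then show "\<bar>f x - f y\<bar> < 1/4" using U1 x y by blast
  qed
  have hL': "\<forall>x\<in>unit_cube. \<forall>y\<in>unit_cube. (\<forall>i. \<bar>x$i - y$i\<bar> \<le> 1 / real L) \<longrightarrow> \<bar>(1 - f x) - (1 - f y)\<bar> < 1/4"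
    using hL by (simp add: abs_minus_commute)
  obtain \<kappa>1 R1 where \<kappa>1: "\<kappa>1 > 0" and NZ1: "\<forall>R\<ge>R1. \<forall>h. (\<forall>k. 0 \<le> h k \<and> h k \<le> 1) \<longrightarrow>
      (\<forall>k. f (Yv (L*R) k) < 1/4 \<longrightarrow> h k = 0) \<longrightarrow>
      (\<forall>p\<in>unit_cube. f p < \<kappa>1 \<longrightarrow> factory_prob (gfac (L*R) h) p \<le> 2 * f p)"
    using near_zero[OF assms(3) f0 L0 hL] by (elim exE conjE) (rule that)
  obtain \<kappa>2 R2 where \<kappa>2: "\<kappa>2 > 0" and NZ2: "\<forall>R\<ge>R2. \<forall>h. (\<forall>k. 0 \<le> h k \<and> h k \<le> 1) \<longrightarrow>
      (\<forall>k. 1 - f (Yv (L*R) k) < 1/4 \<longrightarrow> h k = 0) \<longrightarrow>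
      (\<forall>p\<in>unit_cube. 1 - f p < \<kappa>2 \<longrightarrow> factory_prob (gfac (L*R) h) p \<le> 2 * (1 - f p))"
    using near_zero[OF assms(4) f0' L0 hL'] by (elim exE conjE) (rule that)
  define \<kappa> where "\<kappa> = min \<kappa>1 (min \<kappa>2 (1/4))"
  have \<kappa>0: "0 < \<kappa>" "\<kappa> \<le> \<kappa>1" "\<kappa> \<le> \<kappa>2" "\<kappa> \<le> 1/4" using \<kappa>1 \<kappa>2 by (auto simp: \<kappa>_def)
  obtain d2 where d2: "d2 > 0" and
    U2: "\<forall>x\<in>unit_cube. \<forall>y\<in>unit_cube. (\<forall>i. \<bar>x$i - y$i\<bar> \<le> d2) \<longrightarrow> \<bar>f x - f y\<bar> < \<kappa>/4"
    using ucoord[OF cont, of "\<kappa>/4"] \<kappa>0 by auto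
  define R where "R = max R1 R2 + nat \<lceil>real CARD('n) / (2 * \<kappa> * d2\<^sup>2)\<rceil> + 1"
  define N where "N = L * R"
  have RR: "R1 \<le> R" "R2 \<le> R" by (auto simp: R_def)
  have N0: "0 < N" using L0 by (simp add: N_def R_def)
  have "real CARD('n) / (2 * \<kappa> * d2\<^sup>2) \<le> real R" unfolding R_def by linarith
  also have "real R \<le> real N"
  proof -
    have "real R * 1 \<le> real R * real L" using L0 by (intro mult_left_mono) auto
    then show ?thesis by (simp add: N_def mult.commute)
  qed
  finally have Nbig: "real CARD('n) / (2 * \<kappa> * d2\<^sup>2) \<le> real N" .
  define h where "h k = psi (f (Yv N k))" for k
  define g where "g = factory_prob (gfac N h :: 'n factory)"
  have h01: "\<forall>k. 0 \<le> h k \<and> h k \<le> 1" by (simp add: h_def psi01)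
  have h01': "\<forall>k. 0 \<le> 1 - h k \<and> 1 - h k \<le> 1" by (simp add: h_def psi01)
  have g01: "0 \<le> g p \<and> g p \<le> 1" if "p \<in> unit_cube" for p
    unfolding g_def by (rule prob_gfac_range[OF that])
  have gc: "1 - g p = factory_prob (gfac N (\<lambda>k. 1 - h k)) p" for p
    unfolding g_def by (simp add: prob_gfac_compl[OF h01])
  have near1: "g p \<le> 2 * f p" if "p \<in> unit_cube" "f p < \<kappa>1" for p
    using NZ1[rule_format, OF RR(1) h01[rule_format] _ that] unfolding g_def N_def h_def by (auto simp: psi_lo)
  have near2: "1 - g p \<le> 2 * (1 - f p)" if "p \<in> unit_cube" "1 - f p < \<kappa>2" for p
  proof -
    have "\<forall>k. 1 - f (Yv (L*R) k) < 1/4 \<longrightarrow> 1 - h k = 0"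
      by (auto simp: h_def N_def psi_hi)
    then show ?thesis using NZ2[rule_format, OF RR(2) h01'[rule_format] _ that] unfolding gc N_def by auto
  qed
  have Ycube: "Yv N k \<in> unit_cube" if "\<forall>i. k i \<le> N" for k
    using that N0 by (auto simp: unit_cube_def Yv_def field_simps)
  have closeh: "\<bar>h k - psi (f p)\<bar> \<le> \<kappa>/2"
    if p: "p \<in> unit_cube" and k: "\<forall>i. k i \<le> N" "\<forall>i. \<bar>real (k i) / real N - p $ i\<bar> < d2" for p k
  proof -
    have "\<bar>f (Yv N k) - f p\<bar> < \<kappa>/4"
      using U2 Ycube[OF k(1)] p k(2) by (auto simp: Yv_def less_imp_le)
    then show ?thesis using psi_lip[of "f (Yv N k)" "f p"] by (simp add: h_def)
  qed
  have app1: "g p \<le> psi (f p) + \<kappa>" if p: "p \<in> unit_cube" for p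
    unfolding g_def
  proof (rule approx_ub[OF p N0 d2 psi01(1) \<kappa>0(1) h01 _ Nbig], intro allI impI)
    fix k assume "\<forall>i. k i \<le> N" "\<forall>i. \<bar>real (k i) / real N - p $ i\<bar> < d2"
    then have "\<bar>h k - psi (f p)\<bar> \<le> \<kappa>/2" by (rule closeh[OF p])
    then show "h k \<le> psi (f p) + \<kappa> / 2" by linarith
  qed
  have app2: "1 - g p \<le> (1 - psi (f p)) + \<kappa>" if p: "p \<in> unit_cube" for p
    unfolding gc
  proof (rule approx_ub[OF p N0 d2 _ \<kappa>0(1) h01' _ Nbig])
    show "0 \<le> 1 - psi (f p)" using psi01 by simp
    show "\<forall>k. (\<forall>i. k i \<le> N) \<longrightarrow> (\<forall>i. \<bar>real (k i) / real N - p $ i\<bar> < d2) \<longrightarrow> 1 - h k \<le> 1 - psi (f p) + \<kappa> / 2"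
    proof (intro allI impI)
      fix k assume "\<forall>i. k i \<le> N" "\<forall>i. \<bar>real (k i) / real N - p $ i\<bar> < d2"
      then have "\<bar>h k - psi (f p)\<bar> \<le> \<kappa>/2" by (rule closeh[OF p])
      then show "1 - h k \<le> 1 - psi (f p) + \<kappa> / 2" by linarith
    qed
  qed
  have up: "g p \<le> 2 * f p" if p: "p \<in> unit_cube" for p
  proof -
    consider "f p < \<kappa>1" | "\<kappa>1 \<le> f p" "f p \<le> 1/4" | "1/4 < f p" "f p \<le> 1/2" | "1/2 < f p" by linarith
    then show ?thesis
    proof cases
      case 1 then show ?thesis using near1 p by auto
    next
      case 2 then show ?thesis using app1[OF p] psi_lo[OF 2(2)] \<kappa>0 by linarith
    next
      case 3 then show ?thesis using app1[OF p] psi_le[OF f01(1)[OF p] 3(2)] \<kappa>0 by linarith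
    next
      case 4 then show ?thesis using g01[OF p] by argo
    qed
  qed
  have dn: "1 - g p \<le> 2 * (1 - f p)" if p: "p \<in> unit_cube" for p
  proof -
    consider "1 - f p < \<kappa>2" | "\<kappa>2 \<le> 1 - f p" "3/4 \<le> f p" | "1/2 \<le> f p" "f p < 3/4" | "f p < 1/2" by linarith
    then show ?thesis
    proof cases
      case 1 then show ?thesis using near2 p by auto
    next
      case 2
      have "1 - g p \<le> \<kappa>" using app2[OF p] psi_hi[OF 2(2)] by simp
      moreover have "\<kappa> \<le> 1 - f p" using 2 \<kappa>0 by linarith
      ultimately show ?thesis using \<kappa>0 by argo
    next
      case 3 then show ?thesis using app2[OF p] psi_ge[OF 3(1) f01(2)[OF p]] \<kappa>0 by argo
    next
      case 4 then show ?thesis using g01[OF p] by argo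
    qed
  qed
  define ft where "ft = (\<lambda>p. 4/3 * (f p - 1/4 * g p))"
  have ft01: "ft ` unit_cube \<subseteq> {0..1}"
  proof
    fix y assume "y \<in> ft ` unit_cube"
    then obtain p where p: "p \<in> unit_cube" and y: "y = ft p" by auto
    show "y \<in> {0..1}" using up[OF p] dn[OF p] g01[OF p] unfolding y ft_def by auto
  qed
  have ftc: "continuous_on unit_cube ft"
    unfolding ft_def g_def by (intro continuous_intros cont prob_cont)
  have pb1: "poly_bounded ft"
  proof (rule pb_transfer[OF assms(3)])
    fix q :: "real ^ 'n" assume q: "q \<in> unit_cube" "f q = 0"
    then have "g q = 0" using up[OF q(1)] g01[OF q(1)] by linarith
    then show "ft q = 0" using q by (simp add: ft_def)
  next
    fix p :: "real ^ 'n" assume p: "p \<in> unit_cube"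
    show "2/3 * f p \<le> ft p" using up[OF p] by (simp add: ft_def)
  qed
  have pb2: "poly_bounded (\<lambda>p. 1 - ft p)"
  proof (rule pb_transfer[OF assms(4)])
    fix q :: "real ^ 'n" assume q: "q \<in> unit_cube" "1 - f q = 0"
    then have "g q = 1" using dn[OF q(1)] g01[OF q(1)] by argo
    then show "1 - ft q = 0" using q by (simp add: ft_def)
  next
    fix p :: "real ^ 'n" assume p: "p \<in> unit_cube"
    show "2/3 * (1 - f p) \<le> 1 - ft p" using dn[OF p] unfolding ft_def by argo
  qed
  have impl: "finite_factory_implementable g"
    unfolding finite_factory_implementable_def g_def gfac_def using valid_multi by blast
  have grange: "g ` unit_cube \<subseteq> {0..1}" using g01 by auto
  show ?thesis
    by (rule exI[of _ g]) (use grange impl ft01 ftc pb1 pb2 in \<open>simp add: ft_def Let_def\<close>)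
qed


end
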